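(* Assume the setting below, on the mesh $S_\lambda$ with either $\lambda=N$ or $\lambda=\varepsilon^{-1}$. Suppose there are a constant $C'>0$ and numbers $\tilde\eta_1,\tilde\eta_2\ge0$ such that \[ |\tau_i[w]|\le \begin{cases} C'\tilde\eta_1\varepsilon^{-1}, & 1\le i\le J-1,\\ C'\tilde\eta_2, & J\le i\le N-1.\end{cases} \] Then \[ \|w^N-W^N\|\le C\max\{\tilde\eta_1\ln\lambda,\ \tilde\eta_2\}, \] where $C$ is independent of $\varepsilon$, $N$, $\tilde\eta_1$ and $\tilde\eta_2$.
   Context: Standing setup. Let $0<\varepsilon<1$. Let $b,c,f\in C^4[0,1]$, and let $\beta$ be a constant with $b(x)>\beta>0$ and $c(x)\ge0$ on $[0,1]$. Let $u$ be the solution of $-\varepsilon u''-b u'+cu=f$ on $(0,1)$ with $u(0)=u(1)=0$. Let $u_0$ be the solution of $-b u_0'+c u_0=f$ on $(0,1)$ with $u_0(1)=0$. Set $w=u-u_0$; it solves $-\varepsilon w''-bw'+cw=\varepsilon u_0''$, $w(0)=-u_0(0)$, $w(1)=0$. Mesh $S_\lambda$. $N$ is a positive integer. $Q\in(0,1)$ is a fixed rational number such that $J=QN$ is an integer. $a>0$ is a mesh parameter, and $\lambda\in\{N,\varepsilon^{-1}\}$. The transition point is $\xi=(a\varepsilon/\beta)\ln\lambda$, assumed to satisfy $\xi\le Q$. Set $h=\xi/J$ and $H=(1-\xi)/(N-J)$. The mesh points are $x_i=ih$ for $0\le i\le J$ and $x_i=\xi+(i-J)H$ for $J\le i\le N$.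 Write $h_i=x_i-x_{i-1}$ and $\hbar_i=(h_i+h_{i+1})/2$. Scheme. $D^+U_i=(U_{i+1}-U_i)/h_{i+1}$, $D^-U_i=(U_i-U_{i-1})/h_i$, $D''U_i=(D^+U_i-D^-U_i)/\hbar_i$. Let $\sigma(\rho)=2\rho/(e^{2\rho}-1)$ for $\rho>0$, $\sigma(0)=1$, and $\rho_i=b(x_i)h_{i+1}/(2\varepsilon)$. The ASI operator is $L^NU_i=-\varepsilon\sigma(\rho_i)D''U_i-b(x_i)D^+U_i+c(x_i)U_i$ for $1\le i\le N-1$. $W^N$ solves $W^N_0=-u_0(0)$, $L^NW^N_i=\varepsilon u_0''(x_i)$ for $1\le i\le N-1$, $W^N_N=0$. $g^N$ is the restriction of $g$ to the mesh, and $\|U\|=\max_i|U_i|$. The truncation error is $\tau_i[g]=-\varepsilon\sigma(\rho_i)D''g(x_i)-b(x_i)D^+g(x_i)+\varepsilon g''(x_i)+b(x_i)g'(x_i)$. $C$ denotes a generic positive constant independent of $\varepsilon$ and $N$. *)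

theory Defs
  imports "HOL-Analysis.Analysis"
begin

definition Ck_on :: "nat \<Rightarrow> real set \<Rightarrow> (real \<Rightarrow> real) \<Rightarrow> bool" where
  "Ck_on k S g \<longleftrightarrow> (\<exists>D :: nat \<Rightarrow> real \<Rightarrow> real. D 0 = g \<and>
      (\<forall>j<k. \<forall>x\<in>S. (D j has_real_derivative D (Suc j) x) (at x within S)) \<and>
      continuous_on S (D k))"

definition twice_diff_01 :: "(real \<Rightarrow> real) \<Rightarrow> bool" where
  "twice_diff_01 g \<longleftrightarrow> (\<forall>x\<in>{0<..<1}. (g has_real_derivative deriv g x) (at x) \<and>
      (deriv g has_real_derivative deriv (deriv g) x) (at x))"

definition bvp_solution :: "real \<Rightarrow> (real \<Rightarrow> real) \<Rightarrow> (real \<Rightarrow> real) \<Rightarrow> (real \<Rightarrow> real) \<Rightarrow> (real \<Rightarrow> real) \<Rightarrow> bool" where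
  "bvp_solution \<epsilon> b c f u \<longleftrightarrow> continuous_on {0..1} u \<and> twice_diff_01 u \<and>
     (\<forall>x\<in>{0<..<1}. - \<epsilon> * deriv (deriv u) x - b x * deriv u x + c x * u x = f x) \<and>
     u 0 = 0 \<and> u 1 = 0"

definition reduced_solution :: "(real \<Rightarrow> real) \<Rightarrow> (real \<Rightarrow> real) \<Rightarrow> (real \<Rightarrow> real) \<Rightarrow> (real \<Rightarrow> real) \<Rightarrow> bool" where
  "reduced_solution b c f u0 \<longleftrightarrow> continuous_on {0..1} u0 \<and> twice_diff_01 u0 \<and>
     (\<forall>x\<in>{0<..<1}. - b x * deriv u0 x + c x * u0 x = f x) \<and> u0 1 = 0"

definition transition :: "real \<Rightarrow> real \<Rightarrow> real \<Rightarrow> real \<Rightarrow> real" where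
  "transition \<beta> a \<epsilon> lam = (a * \<epsilon> / \<beta>) * ln lam"

definition mesh_pt :: "real \<Rightarrow> nat \<Rightarrow> nat \<Rightarrow> nat \<Rightarrow> real" where
  "mesh_pt \<xi> J N i = (if i \<le> J then real i * (\<xi> / real J)
                      else \<xi> + real (i - J) * ((1 - \<xi>) / real (N - J)))"

definition Dp :: "(nat \<Rightarrow> real) \<Rightarrow> (nat \<Rightarrow> real) \<Rightarrow> nat \<Rightarrow> real" where
  "Dp x U i = (U (Suc i) - U i) / (x (Suc i) - x i)"

definition Dm :: "(nat \<Rightarrow> real) \<Rightarrow> (nat \<Rightarrow> real) \<Rightarrow> nat \<Rightarrow> real" where
  "Dm x U i = (U i - U (i - 1)) / (x i - x (i - 1))"

definition hbar :: "(nat \<Rightarrow> real) \<Rightarrow> nat \<Rightarrow> real" where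
  "hbar x i = ((x i - x (i - 1)) + (x (Suc i) - x i)) / 2"

definition D2 :: "(nat \<Rightarrow> real) \<Rightarrow> (nat \<Rightarrow> real) \<Rightarrow> nat \<Rightarrow> real" where
  "D2 x U i = (Dp x U i - Dm x U i) / hbar x i"

definition sigma :: "real \<Rightarrow> real" where
  "sigma \<rho> = (if \<rho> = 0 then 1 else 2 * \<rho> / (exp (2 * \<rho>) - 1))"

definition rho :: "real \<Rightarrow> (real \<Rightarrow> real) \<Rightarrow> (nat \<Rightarrow> real) \<Rightarrow> nat \<Rightarrow> real" where
  "rho \<epsilon> b x i = b (x i) * (x (Suc i) - x i) / (2 * \<epsilon>)"

definition LN :: "real \<Rightarrow> (real \<Rightarrow> real) \<Rightarrow> (real \<Rightarrow> real) \<Rightarrow> (nat \<Rightarrow> real) \<Rightarrow> (nat \<Rightarrow> real) \<Rightarrow> nat \<Rightarrow> real" where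
  "LN \<epsilon> b c x U i = - \<epsilon> * sigma (rho \<epsilon> b x i) * D2 x U i - b (x i) * Dp x U i + c (x i) * U i"

definition tau :: "real \<Rightarrow> (real \<Rightarrow> real) \<Rightarrow> (nat \<Rightarrow> real) \<Rightarrow> (real \<Rightarrow> real) \<Rightarrow> nat \<Rightarrow> real" where
  "tau \<epsilon> b x g i = - \<epsilon> * sigma (rho \<epsilon> b x i) * D2 x (\<lambda>j. g (x j)) i
                    - b (x i) * Dp x (\<lambda>j. g (x j)) i
                    + \<epsilon> * deriv (deriv g) (x i) + b (x i) * deriv g (x i)"

end

theory Submission
  imports Defs
begin


lemma LN_form:
  "LN \<epsilon> b c x U i = \<epsilon> * sigma (rho \<epsilon> b x i) / hbar x i * Dm x U i
     - (\<epsilon> * sigma (rho \<epsilon> b x i) / hbar x i + b (x i)) * Dp x U i + c (x i) * U i"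
  unfolding LN_def D2_def by (simp add: algebra_simps diff_divide_distrib)

lemma LN_lin:
  "LN \<epsilon> b c x (\<lambda>j. \<alpha> * U j + \<gamma> * V j) i = \<alpha> * LN \<epsilon> b c x U i + \<gamma> * LN \<epsilon> b c x V i"
  unfolding LN_form Dm_def Dp_def by (simp add: algebra_simps diff_divide_distrib add_divide_distrib)

lemma LN_diff:
  "LN \<epsilon> b c x (\<lambda>j. U j - V j) i = LN \<epsilon> b c x U i - LN \<epsilon> b c x V i"
  using LN_lin[of \<epsilon> b c x 1 U "-1" V i] by simp

lemma LN_add:
  "LN \<epsilon> b c x (\<lambda>j. U j + V j) i = LN \<epsilon> b c x U i + LN \<epsilon> b c x V i"
  using LN_lin[of \<epsilon> b c x 1 U 1 V i] by simp

lemma sigma_pos: "\<rho> > 0 \<Longrightarrow> 0 < sigma \<rho>"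
  unfolding sigma_def using exp_gt_one[of "2*\<rho>"] by auto

lemma sigma_le1: "\<rho> > 0 \<Longrightarrow> sigma \<rho> \<le> 1"
proof -
  assume r: "\<rho> > 0"
  have "2*\<rho> \<le> exp (2*\<rho>) - 1" using exp_ge_add_one_self[of "2*\<rho>"] by linarith
  thus ?thesis unfolding sigma_def using r exp_gt_one[of "2*\<rho>"] by auto
qed

lemma sigma_ge: assumes "\<rho> > 0" "\<rho> \<le> 1/8" shows "sigma \<rho> \<ge> 3/4"
proof -
  have e: "exp (2*\<rho>) \<le> 1 + 2*\<rho> + (2*\<rho>)^2" using exp_bound[of "2*\<rho>"] assms by auto
  have "(2*\<rho>)^2 \<le> (2*\<rho>) * (1/4)" using assms by (simp add: power2_eq_square)
  hence "4 * (\<rho>*\<rho>) \<le> \<rho>/2" by (simp add: power2_eq_square)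
  hence d: "exp (2*\<rho>) - 1 \<le> (8/3) * \<rho>" using e assms(1) unfolding power2_eq_square by linarith
  have p: "exp (2*\<rho>) - 1 > 0" using exp_gt_one[of "2*\<rho>"] assms by auto
  have "3/4 * (exp (2*\<rho>) - 1) \<le> 2 * \<rho>" using d by simp
  thus ?thesis unfolding sigma_def using assms p by (simp add: pos_le_divide_eq)
qed

lemma comparison:
  assumes eps: "\<epsilon> > 0" and mono: "\<forall>i<N. x i < x (Suc i)"
    and bc: "\<forall>i. 1 \<le> i \<and> i < N \<longrightarrow> b (x i) > 0 \<and> c (x i) \<ge> 0"
    and z0: "Z 0 \<ge> 0" and zN: "Z N \<ge> 0"
    and L: "\<forall>i. 1 \<le> i \<and> i < N \<longrightarrow> LN \<epsilon> b c x Z i \<ge> 0"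
  shows "\<forall>i\<le>N. Z i \<ge> 0"
proof (rule ccontr)
  assume "\<not> ?thesis"
  then obtain i0 where i0: "i0 \<le> N" "Z i0 < 0" by auto
  define m where "m = Min (Z ` {..N})"
  have fin: "finite (Z ` {..N})" by simp
  have mle: "\<And>j. j \<le> N \<Longrightarrow> m \<le> Z j" unfolding m_def using fin by auto
  have "m \<in> Z ` {..N}" unfolding m_def using fin by (intro Min_in) auto
  then have ex: "\<exists>k. k \<le> N \<and> Z k = m" by auto
  define k where "k = (LEAST k. k \<le> N \<and> Z k = m)"
  have k: "k \<le> N" "Z k = m" using LeastI_ex[OF ex] unfolding k_def by auto
  have kl: "\<And>j. j < k \<Longrightarrow> \<not> (j \<le> N \<and> Z j = m)" unfolding k_def by (rule not_less_Least)
  have mneg: "m < 0" using mle[OF i0(1)] i0(2) by simp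
  have k0: "k \<noteq> 0" using z0 k mneg by (metis not_less)
  have kN: "k \<noteq> N" using zN k mneg by auto
  have k1: "1 \<le> k" "k < N" using k0 kN k by auto
  have km: "Z (k-1) > Z k" using kl[of "k-1"] mle[of "k-1"] k k0 by fastforce
  have kp: "Z (Suc k) \<ge> Z k" using mle[of "Suc k"] k k1 by auto
  have s1: "x (k-1) < x k" using mono[rule_format, of "k-1"] k1 by simp
  have s2: "x k < x (Suc k)" using mono k1 by auto
  have bk: "b (x k) > 0" "c (x k) \<ge> 0" using bc k1 by auto
  have rp: "rho \<epsilon> b x k > 0" unfolding rho_def using bk s2 eps by simp
  have hb: "hbar x k > 0" unfolding hbar_def using s1 s2 by simp
  have co: "\<epsilon> * sigma (rho \<epsilon> b x k) / hbar x k > 0" using sigma_pos[OF rp] hb eps by simp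
  have dm: "Dm x Z k < 0" unfolding Dm_def using km s1 by (simp add: divide_neg_pos)
  have dp: "Dp x Z k \<ge> 0" unfolding Dp_def using kp s2 by simp
  have t1: "\<epsilon> * sigma (rho \<epsilon> b x k) / hbar x k * Dm x Z k < 0" by (rule mult_pos_neg[OF co dm])
  have t2: "(\<epsilon> * sigma (rho \<epsilon> b x k) / hbar x k + b (x k)) * Dp x Z k \<ge> 0" using co bk dp by simp
  have t3: "c (x k) * Z k \<le> 0" using bk k mneg by (simp add: mult_nonneg_nonpos)
  have "LN \<epsilon> b c x Z k < 0" unfolding LN_form using t1 t2 t3 by linarith
  thus False using L k1 by auto
qed

lemma barrier:
  assumes eps: "\<epsilon> > 0" and mono: "\<forall>i<N. x i < x (Suc i)"
    and bc: "\<forall>i. 1 \<le> i \<and> i < N \<longrightarrow> b (x i) > 0 \<and> c (x i) \<ge> 0"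
    and e: "e 0 = 0" "e N = 0" and p: "\<Phi> 0 \<ge> 0" "\<Phi> N \<ge> 0"
    and L: "\<forall>i. 1 \<le> i \<and> i < N \<longrightarrow> \<bar>LN \<epsilon> b c x e i\<bar> \<le> LN \<epsilon> b c x \<Phi> i"
  shows "\<forall>i\<le>N. \<bar>e i\<bar> \<le> \<Phi> i"
proof -
  have A: "\<forall>i\<le>N. (\<lambda>j. 1 * \<Phi> j + (-1) * e j) i \<ge> 0"
    apply (rule comparison[OF eps mono bc])
    using e p L by (auto simp: LN_diff LN_add abs_le_iff)
  have B: "\<forall>i\<le>N. (\<lambda>j. 1 * \<Phi> j + 1 * e j) i \<ge> 0"
    apply (rule comparison[OF eps mono bc])
    using e p L by (auto simp: LN_diff LN_add abs_le_iff)
  show ?thesis using A B by (auto simp: abs_le_iff)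
qed



locale msh =
  fixes \<xi> :: real and J N :: nat
  assumes xi0: "0 < \<xi>" and xi1: "\<xi> < 1" and J0: "0 < J" and JN: "J < N"
begin

abbreviation "x \<equiv> mesh_pt \<xi> J N"
definition "h = \<xi> / real J"
definition "H = (1 - \<xi>) / real (N - J)"

lemma h_pos: "h > 0" unfolding h_def using xi0 J0 by simp
lemma H_pos: "H > 0" unfolding H_def using xi1 JN by simp
lemma h_le: "h \<le> \<xi>" unfolding h_def using xi0 J0 by (simp add: divide_le_eq)

lemma x_lo: "i \<le> J \<Longrightarrow> x i = real i * h"
  unfolding mesh_pt_def h_def by simp

lemma x_hi: "J \<le> i \<Longrightarrow> x i = \<xi> + real (i - J) * H"
  unfolding mesh_pt_def H_def h_def using J0 by (cases "i = J") auto

lemma x_J: "x J = \<xi>" using x_hi[of J] by simp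
lemma x_0: "x 0 = 0" using x_lo[of 0] by simp
lemma x_N: "x N = 1"
proof -
  have "x N = \<xi> + real (N - J) * H" using x_hi JN by simp
  also have "\<dots> = 1" unfolding H_def using JN by simp
  finally show ?thesis .
qed

lemma step_lo: "i < J \<Longrightarrow> x (Suc i) - x i = h"
  using x_lo[of i] x_lo[of "Suc i"] by (simp add: algebra_simps)

lemma step_hi: "J \<le> i \<Longrightarrow> x (Suc i) - x i = H"
  using x_hi[of i] x_hi[of "Suc i"] by (simp add: Suc_diff_le algebra_simps)

lemma mono: "\<forall>i<N. x i < x (Suc i)"
  using step_lo step_hi h_pos H_pos by (metis diff_gt_0_iff_gt not_le)

lemma x_ge0: "x i \<ge> 0"
  unfolding mesh_pt_def using xi0 xi1 JN by auto

lemma x_le_xi: "i \<le> J \<Longrightarrow> x i \<le> \<xi>"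
  using x_lo[of i] h_def J0 xi0 by (simp add: divide_le_eq mult.commute)

lemma x_ge_xi: "J \<le> i \<Longrightarrow> x i \<ge> \<xi>"
  using x_hi[of i] H_pos by simp

lemma x_le1: "i \<le> N \<Longrightarrow> x i \<le> 1"
proof (cases "i \<le> J")
  case True thus ?thesis using x_le_xi xi1 by force
next
  case False
  hence "x i = \<xi> + real (i - J) * H" using x_hi by simp
  also assume "i \<le> N"
  hence "real (i - J) * H \<le> real (N - J) * H" using H_pos by (intro mult_right_mono) auto
  hence "\<xi> + real (i - J) * H \<le> \<xi> + real (N-J) * H" by simp
  finally show ?thesis using x_N x_hi JN by simp
qed

lemma x_in: "1 \<le> i \<Longrightarrow> i < N \<Longrightarrow> 0 < x i \<and> x i < 1"
proof -
  assume i: "1 \<le> i" "i < N"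
  have a: "0 < x i"
  proof (cases "i \<le> J")
    case True thus ?thesis using x_lo[OF True] h_pos i by simp
  next
    case False thus ?thesis using x_ge_xi[of i] xi0 by simp
  qed
  have b: "x i < 1"
  proof (cases "i \<le> J")
    case True thus ?thesis using x_le_xi[OF True] xi1 by simp
  next
    case False
    hence "real (i - J) * H < real (N - J) * H" using H_pos i by (intro mult_strict_right_mono) auto
    thus ?thesis using x_hi[of i] x_hi[of N] x_N False JN by simp
  qed
  show ?thesis using a b by simp
qed

end

definition C1g :: "real \<Rightarrow> real \<Rightarrow> real \<Rightarrow> real" where
  "C1g \<beta> Bb a = a/\<beta>^2 + 2/(\<beta>^2 * min 1 (\<beta> / (4 * a * Bb))) + (a/\<beta>)^2 * min 1 (\<beta> / (4 * a * Bb))"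

lemma C1g_pos: "\<beta> > 0 \<Longrightarrow> a > 0 \<Longrightarrow> Bb > 0 \<Longrightarrow> C1g \<beta> Bb a > 0"
  unfolding C1g_def by (intro add_pos_nonneg) auto

locale bar = msh +
  fixes \<epsilon> \<beta> Bb :: real and b c :: "real \<Rightarrow> real"
  assumes eps: "\<epsilon> > 0" and beta: "\<beta> > 0"
    and bb: "\<forall>y\<in>{0..1}. \<beta> < b y \<and> b y \<le> Bb" and cc: "\<forall>y\<in>{0..1}. c y \<ge> 0"
begin

lemma xin01: "i \<le> N \<Longrightarrow> x i \<in> {0..1}" using x_ge0 x_le1 by auto

lemma stepm: "1 \<le> i \<Longrightarrow> i < N \<Longrightarrow> x (i-1) < x i"
  using mono[rule_format, of "i-1"] by simp

lemma intr:
  assumes "1 \<le> i" "i < N"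
  shows "\<beta> < b (x i) \<and> b (x i) \<le> Bb \<and> c (x i) \<ge> 0 \<and> 0 < sigma (rho \<epsilon> b x i)
     \<and> sigma (rho \<epsilon> b x i) \<le> 1 \<and> hbar x i > 0 \<and> rho \<epsilon> b x i > 0"
proof -
  have xi: "x i \<in> {0..1}" using xin01 assms by simp
  have b: "\<beta> < b (x i)" "b (x i) \<le> Bb" "c (x i) \<ge> 0" using bb cc xi by auto
  have s1: "x (i-1) < x i" using stepm assms by simp
  have s2: "x i < x (Suc i)" using mono assms by simp
  have rp: "rho \<epsilon> b x i > 0" unfolding rho_def using b beta s2 eps by simp
  have hb: "hbar x i > 0" unfolding hbar_def using s1 s2 by simp
  show ?thesis using b rp hb sigma_pos[OF rp] sigma_le1[OF rp] by simp
qed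

definition Phi2 :: "nat \<Rightarrow> real" where "Phi2 i = (1 - x i) / \<beta>"

lemma Phi2_L: assumes "1 \<le> i" "i < N" shows "LN \<epsilon> b c x Phi2 i \<ge> 1"
proof -
  note I = intr[OF assms]
  have s1: "x (i-1) < x i" using stepm assms by simp
  have s2: "x i < x (Suc i)" using mono assms by simp
  have dm: "Dm x Phi2 i = -1/\<beta>" unfolding Dm_def Phi2_def using s1 beta
    by (simp add: field_simps)
  have dp: "Dp x Phi2 i = -1/\<beta>" unfolding Dp_def Phi2_def using s2 beta
    by (simp add: field_simps)
  have "LN \<epsilon> b c x Phi2 i = b (x i) / \<beta> + c (x i) * Phi2 i"
    unfolding LN_form dm dp using I beta by (simp add: field_simps)
  moreover have "Phi2 i \<ge> 0" unfolding Phi2_def using x_le1 assms beta by simp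
  moreover have "b (x i) / \<beta> \<ge> 1" using I beta by simp
  ultimately show ?thesis using I by (smt (verit) mult_nonneg_nonneg)
qed

lemma Phi2_bd: "i \<le> N \<Longrightarrow> 0 \<le> Phi2 i \<and> Phi2 i \<le> 1/\<beta>"
  unfolding Phi2_def using x_ge0[of i] x_le1[of i] beta by (simp add: divide_right_mono)

end

context bar begin

definition "kap = \<beta> / 2"
definition "tt = kap * H / \<epsilon>"
definition "rr = 1 / (1 + tt)"
definition PhiA :: "nat \<Rightarrow> real" where
  "PhiA i = (if i \<le> J then ((\<xi> - x i) / \<epsilon> + 1 / kap) / \<beta> else rr ^ (i - J) / (kap * \<beta>))"

lemma kap_pos: "kap > 0" unfolding kap_def using beta by simp
lemma tt_pos: "tt > 0" unfolding tt_def using kap_pos H_pos eps by simp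
lemma rr_pos: "rr > 0" "rr \<le> 1" unfolding rr_def using tt_pos by auto
lemma one_m_rr: "1 - rr = tt * rr" unfolding rr_def using tt_pos by (simp add: field_simps)

lemma PhiA_fine: assumes "1 \<le> i" "i < J" shows "LN \<epsilon> b c x PhiA i \<ge> 1/\<epsilon>"
proof -
  have iN: "i < N" using assms JN by simp
  note I = intr[OF assms(1) iN]
  have s1: "x (i-1) < x i" using stepm assms iN by simp
  have s2: "x i < x (Suc i)" using mono iN by simp
  have ij: "i - 1 \<le> J" "i \<le> J" "Suc i \<le> J" using assms by auto
  have dm: "Dm x PhiA i = -1/(\<epsilon>*\<beta>)" unfolding Dm_def PhiA_def using s1 beta eps ij
    by (simp add: field_simps)
  have dp: "Dp x PhiA i = -1/(\<epsilon>*\<beta>)" unfolding Dp_def PhiA_def using s2 beta eps assms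
    by (simp add: field_simps)
  have "LN \<epsilon> b c x PhiA i = b (x i) / (\<epsilon>*\<beta>) + c (x i) * PhiA i"
    unfolding LN_form dm dp using I beta eps by (simp add: field_simps)
  moreover have "PhiA i \<ge> 0" unfolding PhiA_def using x_le_xi[of i] assms kap_pos beta eps by simp
  moreover have "b (x i) / (\<epsilon>*\<beta>) \<ge> 1/\<epsilon>" using I beta eps by (simp add: field_simps)
  ultimately show ?thesis using I by (smt (verit) mult_nonneg_nonneg)
qed

lemma PhiA_J: "LN \<epsilon> b c x PhiA J \<ge> 0"
proof -
  have a: "1 \<le> J" "J < N" using J0 JN by auto
  note I = intr[OF a]
  have st: "x J - x (J-1) = h" using step_lo[of "J-1"] J0 by simp
  have s2: "x (Suc J) - x J = H" using step_hi by simp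
  have dm: "Dm x PhiA J = -1/(\<epsilon>*\<beta>)" unfolding Dm_def PhiA_def using st x_J h_pos beta eps
    by (simp add: field_simps)
  have p1: "PhiA (Suc J) - PhiA J = (rr - 1) / (kap * \<beta>)" unfolding PhiA_def using x_J kap_pos beta
    by (simp add: field_simps)
  have epk: "\<epsilon> + kap * H > 0" using eps kap_pos H_pos by (intro add_pos_pos mult_pos_pos)
  have r1: "rr - 1 = - (kap * H) / (\<epsilon> + kap * H)"
    unfolding rr_def tt_def using eps epk by (simp add: field_simps)
  have dp: "Dp x PhiA J = -1/(\<beta>*(\<epsilon> + kap*H))" unfolding Dp_def p1 s2 r1 using H_pos beta eps kap_pos epk
    by (simp add: divide_simps)
  define s where "s = \<epsilon> * sigma (rho \<epsilon> b x J) / hbar x J"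
  have epk: "\<epsilon> + kap * H > 0" using eps kap_pos H_pos by (intro add_pos_pos mult_pos_pos)
  define sg where "sg = sigma (rho \<epsilon> b x J)"
  have hb: "hbar x J \<ge> H/2" unfolding hbar_def using st s2 h_pos by simp
  have key: "b (x J) * hbar x J \<ge> sg * kap * H"
  proof -
    have "sg * kap * H \<le> 1 * kap * H" using I kap_pos H_pos unfolding sg_def by (intro mult_right_mono) auto
    also have "\<dots> \<le> \<beta> * (H/2)" unfolding kap_def by simp
    also have "\<dots> \<le> b (x J) * hbar x J" using I hb beta H_pos by (intro mult_mono) auto
    finally show ?thesis .
  qed
  have "\<epsilon> * b (x J) \<ge> s * kap * H" unfolding s_def using key I eps
    by (simp add: sg_def field_simps)
  moreover have "(s + b (x J)) / (\<epsilon> + kap*H) - s/\<epsilon> = (\<epsilon> * b (x J) - s * kap * H) / (\<epsilon> * (\<epsilon> + kap*H))"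
    using eps epk by (simp add: field_simps)
  moreover have "\<epsilon> * (\<epsilon> + kap*H) > 0" using eps epk by simp
  ultimately have "(s + b (x J)) / (\<epsilon> + kap*H) - s/\<epsilon> \<ge> 0" by simp
  moreover have "LN \<epsilon> b c x PhiA J = ((s + b (x J)) / (\<epsilon> + kap*H) - s/\<epsilon>) / \<beta> + c (x J) * PhiA J"
  proof -
    have "LN \<epsilon> b c x PhiA J = s * (-1/(\<epsilon>*\<beta>)) - (s + b (x J)) * (-1/(\<beta>*(\<epsilon> + kap*H))) + c (x J) * PhiA J"
      unfolding LN_form dm dp s_def by simp
    also have "\<dots> = ((s + b (x J)) / (\<epsilon> + kap*H) - s/\<epsilon>) / \<beta> + c (x J) * PhiA J"
    proof -
      have gen: "\<And>D s bb. D > 0 \<Longrightarrow> s*(-1/(\<epsilon>*\<beta>)) - (s+bb)*(-1/(\<beta>*D)) = ((s+bb)/D - s/\<epsilon>)/\<beta>"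
        using beta eps by (simp add: field_simps)
      show ?thesis using gen[OF epk] by simp
    qed
    finally show ?thesis .
  qed
  moreover have "PhiA J \<ge> 0" unfolding PhiA_def using x_J kap_pos beta by simp
  ultimately show ?thesis using I beta by (smt (verit) mult_nonneg_nonneg divide_nonneg_pos)
qed

lemma PhiA_coarse: assumes "J < i" "i < N" shows "LN \<epsilon> b c x PhiA i \<ge> 0"
proof -
  have a: "1 \<le> i" using assms by simp
  note I = intr[OF a assms(2)]
  define q where "q = PhiA (i-1)"
  have q0: "q = rr ^ (i - 1 - J) / (kap * \<beta>)" unfolding q_def PhiA_def using assms x_J
    by (cases "i - 1 = J") (auto simp: kap_def)
  have qp: "q > 0" using q0 rr_pos kap_pos beta by simp
  have u1: "PhiA i = rr * q"
  proof -
    have "i - J = Suc (i - 1 - J)" using assms by arith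
    thus ?thesis unfolding PhiA_def q0 using assms by simp
  qed
  have u2: "PhiA (Suc i) = rr * (rr * q)"
  proof -
    have "Suc i - J = Suc (Suc (i - 1 - J))" using assms by arith
    thus ?thesis unfolding PhiA_def q0 using assms by simp
  qed
  have s1: "x i - x (i-1) = H" using step_hi[of "i-1"] assms by simp
  have s2: "x (Suc i) - x i = H" using step_hi[of i] assms by simp
  have hb: "hbar x i = H" unfolding hbar_def using s1 s2 by simp
  have dm: "Dm x PhiA i = (rr*q - q)/H" unfolding Dm_def q_def[symmetric] u1 s1 ..
  have dp: "Dp x PhiA i = (rr*(rr*q) - rr*q)/H" unfolding Dp_def u1 u2 s2 ..
  define sg where "sg = sigma (rho \<epsilon> b x i)"
  have e1: "rr*q - q = - tt * rr * q"
  proof -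
    have "rr*q - q = -((1 - rr)*q)" by (simp add: algebra_simps)
    thus ?thesis unfolding one_m_rr by simp
  qed
  have e2: "rr*(rr*q) - rr*q = - tt * rr * (rr * q)"
  proof -
    have "rr*(rr*q) - rr*q = -((1 - rr)*(rr*q))" by (simp add: algebra_simps)
    thus ?thesis unfolding one_m_rr by simp
  qed
  have "LN \<epsilon> b c x PhiA i = \<epsilon> * sg / H * (- tt * rr * q / H) + (\<epsilon> * sg / H + b (x i)) * (tt * rr * (rr * q) / H) + c (x i) * PhiA i"
    unfolding LN_form dm dp hb e1 e2 sg_def by simp
  also have "\<dots> = (tt * rr * q / H) * (rr * b (x i) - \<epsilon> * sg * (1 - rr) / H) + c (x i) * PhiA i"
    using H_pos by (simp add: field_simps)
  also have "\<epsilon> * sg * (1 - rr) / H = sg * kap * rr" unfolding one_m_rr tt_def using eps H_pos by (simp add: field_simps)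
  finally have L: "LN \<epsilon> b c x PhiA i = (tt * rr * q / H) * (rr * (b (x i) - sg * kap)) + c (x i) * PhiA i"
    by (simp add: algebra_simps)
  have "sg * kap \<le> 1 * kap" using I kap_pos unfolding sg_def by (intro mult_right_mono) auto
  moreover have "kap < b (x i)" unfolding kap_def using I beta by simp
  ultimately have "b (x i) - sg * kap \<ge> 0" by simp
  hence "(tt * rr * q / H) * (rr * (b (x i) - sg * kap)) \<ge> 0" using tt_pos rr_pos qp H_pos by simp
  moreover have "c (x i) * PhiA i \<ge> 0" using I u1 rr_pos qp by simp
  ultimately show ?thesis unfolding L by simp
qed

lemma PhiA_bd: "i \<le> N \<Longrightarrow> 0 \<le> PhiA i \<and> PhiA i \<le> (\<xi>/\<epsilon> + 2/\<beta>)/\<beta>"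
proof (cases "i \<le> J")
  case True
  have "0 \<le> (\<xi> - x i) / \<epsilon>" using x_le_xi[OF True] eps by simp
  moreover have "(\<xi> - x i) / \<epsilon> \<le> \<xi>/\<epsilon>" using x_ge0[of i] eps by (simp add: divide_right_mono)
  moreover have "1/kap = 2/\<beta>" unfolding kap_def by simp
  ultimately show ?thesis unfolding PhiA_def using True beta kap_pos by (simp add: divide_right_mono)
next
  case False
  have "rr ^ (i - J) \<le> 1" using rr_pos by (simp add: power_le_one)
  hence "rr ^ (i - J) / (kap*\<beta>) \<le> 1 / (kap * \<beta>)" using kap_pos beta by (simp add: divide_right_mono)
  also have "\<dots> = (2/\<beta>)/\<beta>" unfolding kap_def by simp
  also have "\<dots> \<le> (\<xi>/\<epsilon> + 2/\<beta>)/\<beta>"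
  proof -
    have "2/\<beta> \<le> \<xi>/\<epsilon> + 2/\<beta>" using xi0 eps by simp
    from divide_right_mono[OF this, of \<beta>] show ?thesis using beta by simp
  qed
  finally show ?thesis unfolding PhiA_def using False rr_pos kap_pos beta by simp
qed

definition "Aq = 1 / \<epsilon>^2"
definition PhiB :: "nat \<Rightarrow> real" where
  "PhiB i = (if i \<le> J then Aq * (2*\<xi>*x i - (x i)^2) else Aq * \<xi>^2)"

lemma Aq_pos: "Aq > 0" unfolding Aq_def using eps by simp

lemma PhiB_bd: "0 \<le> PhiB i \<and> PhiB i \<le> Aq * \<xi>^2"
proof (cases "i \<le> J")
  case True
  have "0 \<le> x i * (2*\<xi> - x i)" using x_ge0[of i] x_le_xi[OF True] xi0 by simp
  hence a: "0 \<le> 2*\<xi>*x i - (x i)^2" by (simp add: algebra_simps power2_eq_square)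
  have "0 \<le> (\<xi> - x i)^2" by simp
  hence b: "2*\<xi>*x i - (x i)^2 \<le> \<xi>^2" by (simp add: algebra_simps power2_eq_square)
  show ?thesis unfolding PhiB_def using True a b Aq_pos by (simp add: mult_left_mono)
next
  case False thus ?thesis unfolding PhiB_def using Aq_pos by simp
qed

lemma quad_diff: "y \<noteq> z \<Longrightarrow> ((2*\<xi>*y - y^2) - (2*\<xi>*z - z^2)) / (y - z) = 2*\<xi> - y - z"
  by (simp add: field_simps power2_eq_square)

lemma aux: "(hh::real) > 0 \<Longrightarrow> ee * ss/hh*(AA*(2*xx - yy - (yy - hh))) - (ee * ss/hh + bq)*(AA*(2*xx - (yy+hh) - yy)) + cq = 2*AA*ee * ss - bq*AA*(2*xx - 2*yy - hh) + cq"
  by (simp add: field_simps)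

lemma PhiB_fine: assumes "1 \<le> i" "i < J" and small: "Bb * \<xi> \<le> \<epsilon>/4"
  shows "LN \<epsilon> b c x PhiB i \<ge> 1/\<epsilon>"
proof -
  have iN: "i < N" using assms JN by simp
  note I = intr[OF assms(1) iN]
  have s1: "x i - x (i-1) = h" using step_lo[of "i-1"] assms by simp
  have s2: "x (Suc i) - x i = h" using step_lo[of i] assms by simp
  have ij: "i - 1 \<le> J" "i \<le> J" "Suc i \<le> J" using assms by auto
  have dm: "Dm x PhiB i = Aq * (2*\<xi> - x i - x (i-1))"
  proof -
    have "Dm x PhiB i = Aq * (((2*\<xi>*x i - (x i)^2) - (2*\<xi>*x (i-1) - (x (i-1))^2)) / (x i - x (i-1)))"
      unfolding Dm_def PhiB_def using ij by (simp add: algebra_simps)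
    moreover have "((2*\<xi>*x i - (x i)^2) - (2*\<xi>*x (i-1) - (x (i-1))^2)) / (x i - x (i-1)) = 2*\<xi> - x i - x (i-1)"
      using quad_diff[of "x i" "x (i-1)"] s1 h_pos by simp
    ultimately show ?thesis by metis
  qed
  have dp: "Dp x PhiB i = Aq * (2*\<xi> - x (Suc i) - x i)"
  proof -
    have "Dp x PhiB i = Aq * (((2*\<xi>*x (Suc i) - (x (Suc i))^2) - (2*\<xi>*x i - (x i)^2)) / (x (Suc i) - x i))"
      unfolding Dp_def PhiB_def using ij by (simp add: algebra_simps)
    moreover have "((2*\<xi>*x (Suc i) - (x (Suc i))^2) - (2*\<xi>*x i - (x i)^2)) / (x (Suc i) - x i) = 2*\<xi> - x (Suc i) - x i"
      using quad_diff[of "x (Suc i)" "x i"] s2 h_pos by simp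
    ultimately show ?thesis by metis
  qed
  have hb: "hbar x i = h" unfolding hbar_def using s1 s2 by simp
  define sg where "sg = sigma (rho \<epsilon> b x i)"
  have rle: "rho \<epsilon> b x i \<le> 1/8"
  proof -
    have "b (x i) * h \<le> Bb * \<xi>" using I h_pos h_le beta by (intro mult_mono) auto
    hence "b (x i) * h \<le> \<epsilon>/4" using small by simp
    thus ?thesis unfolding rho_def s2 using eps by (simp add: field_simps)
  qed
  have sg: "sg \<ge> 3/4" unfolding sg_def using sigma_ge I rle by simp
  have L: "LN \<epsilon> b c x PhiB i = 2 * Aq * \<epsilon> * sg - b (x i) * Aq * (2*\<xi> - 2 * x i - h) + c (x i) * PhiB i"
  proof -
    have "LN \<epsilon> b c x PhiB i = \<epsilon> * sg / h * (Aq * (2*\<xi> - x i - x (i-1))) - (\<epsilon> * sg / h + b (x i)) * (Aq * (2*\<xi> - x (Suc i) - x i)) + c (x i) * PhiB i"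
      unfolding LN_form dm dp hb sg_def ..
    also have "x (i-1) = x i - h" using s1 by simp
    also have "x (Suc i) = x i + h" using s2 by simp
    also have "\<epsilon> * sg / h * (Aq * (2*\<xi> - x i - (x i - h))) - (\<epsilon> * sg / h + b (x i)) * (Aq * (2*\<xi> - (x i + h) - x i)) + c (x i) * PhiB i
       = 2 * Aq * \<epsilon> * sg - b (x i) * Aq * (2*\<xi> - 2 * x i - h) + c (x i) * PhiB i"
      using aux[OF h_pos] .
    finally show ?thesis .
  qed
  have "b (x i) * Aq * (2*\<xi> - 2 * x i - h) \<le> Bb * Aq * (2*\<xi>)"
    using I Aq_pos x_ge0[of i] h_pos x_le_xi[of i] ij h_le beta xi0 x_le_xi[of "Suc i"] s2
    by (intro mult_mono) auto
  also have "\<dots> \<le> Aq * \<epsilon> / 2" using small Aq_pos by (simp add: field_simps)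
  finally have t2: "b (x i) * Aq * (2*\<xi> - 2 * x i - h) \<le> Aq * \<epsilon> / 2" .
  have t1: "2 * Aq * \<epsilon> * sg \<ge> 2 * Aq * \<epsilon> * (3/4)" using sg Aq_pos eps by simp
  have t3: "c (x i) * PhiB i \<ge> 0" using I PhiB_bd[of i] by simp
  have "Aq * \<epsilon> = 1/\<epsilon>" unfolding Aq_def using eps by (simp add: power2_eq_square)
  thus ?thesis unfolding L using t1 t2 t3 by linarith
qed

lemma PhiB_J: "LN \<epsilon> b c x PhiB J \<ge> 0"
proof -
  have a: "1 \<le> J" "J < N" using J0 JN by auto
  note I = intr[OF a]
  have dp: "Dp x PhiB J = 0" unfolding Dp_def PhiB_def using x_J by (simp add: power2_eq_square)
  have st: "x J - x (J-1) = h" using step_lo[of "J-1"] J0 by simp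
  have dm: "Dm x PhiB J = Aq * (\<xi> - x (J-1))^2 / h" unfolding Dm_def PhiB_def using x_J st
    by (simp add: power2_eq_square algebra_simps)
  have "Dm x PhiB J \<ge> 0" unfolding dm using Aq_pos h_pos by simp
  moreover have "\<epsilon> * sigma (rho \<epsilon> b x J) / hbar x J \<ge> 0" using I eps by simp
  ultimately have "\<epsilon> * sigma (rho \<epsilon> b x J) / hbar x J * Dm x PhiB J \<ge> 0" by (rule mult_nonneg_nonneg[rotated])
  moreover have "c (x J) * PhiB J \<ge> 0" using I PhiB_bd[of J] by simp
  moreover have "LN \<epsilon> b c x PhiB J = \<epsilon> * sigma (rho \<epsilon> b x J) / hbar x J * Dm x PhiB J + c (x J) * PhiB J"
    unfolding LN_form dp by simp
  ultimately show ?thesis by linarith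
qed

lemma PhiB_coarse: assumes "J < i" "i < N" shows "LN \<epsilon> b c x PhiB i \<ge> 0"
proof -
  have a: "1 \<le> i" using assms by simp
  note I = intr[OF a assms(2)]
  have dp: "Dp x PhiB i = 0" unfolding Dp_def PhiB_def using assms by simp
  have dm: "Dm x PhiB i = 0" unfolding Dm_def PhiB_def using assms x_J by (cases "i - 1 = J") (auto simp: power2_eq_square)
  show ?thesis unfolding LN_form dp dm using I PhiB_bd[of i] by simp
qed


definition "dlt a = min 1 (\<beta> / (4 * a * Bb))"
definition "C1 a = a/\<beta>^2 + 2/(\<beta>^2 * dlt a) + (a/\<beta>)^2 * dlt a"

lemma Bb_pos: "Bb > 0" using bb beta by force

lemma Phi1_ex:
  assumes a: "a > 0" and L: "L > 0" and xi: "\<xi> = (a*\<epsilon>/\<beta>)*L"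
  shows "\<exists>\<Phi>. \<Phi> 0 \<ge> 0 \<and> \<Phi> N \<ge> 0 \<and> (\<forall>i\<le>N. \<Phi> i \<le> C1 a * L) \<and>
     (\<forall>i. 1 \<le> i \<and> i < N \<longrightarrow> LN \<epsilon> b c x \<Phi> i \<ge> (if i < J then 1/\<epsilon> else 0))"
proof -
  have dpos: "dlt a > 0" unfolding dlt_def using beta a Bb_pos by simp
  have xe: "\<xi>/\<epsilon> = a*L/\<beta>" unfolding xi using eps by simp
  have c1: "C1 a \<ge> a/\<beta>^2 + 2/(\<beta>^2 * dlt a)" unfolding C1_def using dpos by simp
  have c2: "C1 a \<ge> (a/\<beta>)^2 * dlt a" unfolding C1_def using dpos beta a by simp
  show ?thesis
  proof (cases "L \<ge> dlt a")
    case True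
    have "(\<xi>/\<epsilon> + 2/\<beta>)/\<beta> = a/\<beta>^2 * L + 2/\<beta>^2" unfolding xe using beta by (simp add: field_simps power2_eq_square)
    also have "2/\<beta>^2 \<le> 2/(\<beta>^2 * dlt a) * L" using True dpos beta by (simp add: field_simps)
    finally have "(\<xi>/\<epsilon> + 2/\<beta>)/\<beta> \<le> (a/\<beta>^2 + 2/(\<beta>^2 * dlt a)) * L" by (simp add: algebra_simps)
    also have "\<dots> \<le> C1 a * L" using c1 L by (intro mult_right_mono) auto
    finally have bd: "(\<xi>/\<epsilon> + 2/\<beta>)/\<beta> \<le> C1 a * L" .
    show ?thesis
    proof (intro exI[of _ PhiA] conjI allI impI)
      show "PhiA 0 \<ge> 0" "PhiA N \<ge> 0" using PhiA_bd by auto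
      fix i assume "i \<le> N" thus "PhiA i \<le> C1 a * L" using PhiA_bd[of i] bd by simp
    next
      fix i assume i: "1 \<le> i \<and> i < N"
      show "LN \<epsilon> b c x PhiA i \<ge> (if i < J then 1/\<epsilon> else 0)"
        using PhiA_fine[of i] PhiA_J PhiA_coarse[of i] i by (cases "i < J"; cases "i = J") auto
    qed
  next
    case False
    have "L \<le> \<beta> / (4 * a * Bb)" using False unfolding dlt_def by simp
    hence "Bb * a * L / \<beta> \<le> 1/4" using beta a Bb_pos by (simp add: field_simps)
    hence "\<epsilon> * (Bb * a * L / \<beta>) \<le> \<epsilon> * (1/4)" using eps by (intro mult_left_mono) auto
    moreover have "Bb * \<xi> = \<epsilon> * (Bb * a * L / \<beta>)" unfolding xi by (simp add: field_simps)
    ultimately have small: "Bb * \<xi> \<le> \<epsilon>/4" by simp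
    have "Aq * \<xi>^2 = (\<xi>/\<epsilon>)^2" unfolding Aq_def by (simp add: power_divide)
    also have "\<dots> = (a/\<beta>)^2 * L * L" unfolding xe by (simp add: power2_eq_square)
    also have "\<dots> \<le> (a/\<beta>)^2 * dlt a * L" using False L by (intro mult_right_mono mult_left_mono) auto
    also have "\<dots> \<le> C1 a * L" using c2 L by (intro mult_right_mono) auto
    finally have bd: "Aq * \<xi>^2 \<le> C1 a * L" .
    show ?thesis
    proof (intro exI[of _ PhiB] conjI allI impI)
      show "PhiB 0 \<ge> 0" "PhiB N \<ge> 0" using PhiB_bd by auto
      fix i assume "i \<le> N" thus "PhiB i \<le> C1 a * L" using PhiB_bd[of i] bd by simp
    next
      fix i assume i: "1 \<le> i \<and> i < N"
      show "LN \<epsilon> b c x PhiB i \<ge> (if i < J then 1/\<epsilon> else 0)"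
        using PhiB_fine[of i, OF _ _ small] PhiB_J PhiB_coarse[of i] i by (cases "i < J"; cases "i = J") auto
    qed
  qed
qed

lemma core:
  assumes a: "a > 0" and L: "L > 0" and xi: "\<xi> = (a*\<epsilon>/\<beta>)*L"
    and e: "e 0 = 0" "e N = 0" and K: "K1 \<ge> 0" "K2 \<ge> 0"
    and tau: "\<forall>i. 1 \<le> i \<and> i < N \<longrightarrow> \<bar>LN \<epsilon> b c x e i\<bar> \<le> (if i < J then K1/\<epsilon> else K2)"
  shows "\<forall>i\<le>N. \<bar>e i\<bar> \<le> K1 * (C1 a * L) + K2 / \<beta>"
proof -
  obtain \<Phi> where P: "\<Phi> 0 \<ge> 0" "\<Phi> N \<ge> 0" "\<forall>i\<le>N. \<Phi> i \<le> C1 a * L"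
     "\<forall>i. 1 \<le> i \<and> i < N \<longrightarrow> LN \<epsilon> b c x \<Phi> i \<ge> (if i < J then 1/\<epsilon> else 0)"
    using Phi1_ex[OF a L xi] by blast
  define Ps where "Ps = (\<lambda>j. K1 * \<Phi> j + K2 * Phi2 j)"
  have bc: "\<forall>i. 1 \<le> i \<and> i < N \<longrightarrow> b (x i) > 0 \<and> c (x i) \<ge> 0"
    using intr beta by (meson less_trans)
  have B: "\<forall>i\<le>N. \<bar>e i\<bar> \<le> Ps i"
  proof (rule barrier[OF eps mono bc e])
    show "Ps 0 \<ge> 0" "Ps N \<ge> 0" unfolding Ps_def using P K Phi2_bd[of 0] Phi2_bd[of N] by auto
    show "\<forall>i. 1 \<le> i \<and> i < N \<longrightarrow> \<bar>LN \<epsilon> b c x e i\<bar> \<le> LN \<epsilon> b c x Ps i"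
    proof (intro allI impI)
      fix i assume i: "1 \<le> i \<and> i < N"
      have l: "LN \<epsilon> b c x Ps i = K1 * LN \<epsilon> b c x \<Phi> i + K2 * LN \<epsilon> b c x Phi2 i"
        unfolding Ps_def by (rule LN_lin)
      have p2: "K2 * LN \<epsilon> b c x Phi2 i \<ge> K2" using Phi2_L[of i] i K mult_left_mono[of 1 _ K2] by auto
      have p1: "K1 * LN \<epsilon> b c x \<Phi> i \<ge> K1 * (if i < J then 1/\<epsilon> else 0)"
        using P(4) i K by (intro mult_left_mono) auto
      show "\<bar>LN \<epsilon> b c x e i\<bar> \<le> LN \<epsilon> b c x Ps i"
        using tau i p1 p2 K eps unfolding l by (cases "i < J") auto
    qed
  qed
  show ?thesis
  proof (intro allI impI)
    fix i assume i: "i \<le> N"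
    have "Ps i \<le> K1 * (C1 a * L) + K2 / \<beta>" unfolding Ps_def
      using P(3) i K Phi2_bd[of i] mult_left_mono[of "Phi2 i" "1/\<beta>" K2] by (intro add_mono mult_left_mono) auto
    thus "\<bar>e i\<bar> \<le> K1 * (C1 a * L) + K2 / \<beta>" using B i by force
  qed
qed


lemma core':
  assumes a: "a > 0" and L: "L > 0" and xi: "\<xi> = (a*\<epsilon>/\<beta>)*L"
    and e: "e 0 = 0" "e N = 0" and K: "K1 \<ge> 0" "K2 \<ge> 0"
    and tau: "\<forall>i. 1 \<le> i \<and> i < N \<longrightarrow> \<bar>LN \<epsilon> b c x e i\<bar> \<le> (if i < J then K1/\<epsilon> else K2)"
  shows "\<forall>i\<le>N. \<bar>e i\<bar> \<le> K1 * (C1g \<beta> Bb a * L) + K2 / \<beta>"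
proof -
  have "C1 a = C1g \<beta> Bb a" unfolding C1_def C1g_def dlt_def ..
  thus ?thesis using core[OF assms] by simp
qed

end


theorem theorem3:
  fixes b c f u0 :: "real \<Rightarrow> real" and \<beta> a Q C' :: real
  assumes "Ck_on 4 {0..1} b" and "Ck_on 4 {0..1} c" and "Ck_on 4 {0..1} f"
    and "\<beta> > 0" and "\<forall>x\<in>{0..1}. b x > \<beta>" and "\<forall>x\<in>{0..1}. c x \<ge> 0"
    and "Q \<in> \<rat>" and "0 < Q" and "Q < 1" and "a > 0" and "C' > 0"
    and "reduced_solution b c f u0"
  shows "\<exists>C>0. \<forall>(\<epsilon>::real) (N::nat) (J::nat) (lam::real) (u::real \<Rightarrow> real) (W::nat \<Rightarrow> real)
            (\<eta>1::real) (\<eta>2::real).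
      0 < \<epsilon> \<and> \<epsilon> < 1 \<and> N > 0 \<and> real J = Q * real N \<and>
      lam \<in> {real N, 1 / \<epsilon>} \<and> transition \<beta> a \<epsilon> lam \<le> Q \<and>
      bvp_solution \<epsilon> b c f u \<and>
      W 0 = - u0 0 \<and> W N = 0 \<and>
      (\<forall>i. 1 \<le> i \<and> i \<le> N - 1 \<longrightarrow>
         LN \<epsilon> b c (mesh_pt (transition \<beta> a \<epsilon> lam) J N) W i
           = \<epsilon> * deriv (deriv u0) (mesh_pt (transition \<beta> a \<epsilon> lam) J N i)) \<and>
      \<eta>1 \<ge> 0 \<and> \<eta>2 \<ge> 0 \<and>
      (\<forall>i. 1 \<le> i \<and> i \<le> J - 1 \<longrightarrow>
         \<bar>tau \<epsilon> b (mesh_pt (transition \<beta> a \<epsilon> lam) J N) (\<lambda>x. u x - u0 x) i\<bar> \<le> C' * \<eta>1 / \<epsilon>) \<and>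
      (\<forall>i. J \<le> i \<and> i \<le> N - 1 \<longrightarrow>
         \<bar>tau \<epsilon> b (mesh_pt (transition \<beta> a \<epsilon> lam) J N) (\<lambda>x. u x - u0 x) i\<bar> \<le> C' * \<eta>2)
      \<longrightarrow> (\<forall>i\<le>N. \<bar>(u (mesh_pt (transition \<beta> a \<epsilon> lam) J N i)
                        - u0 (mesh_pt (transition \<beta> a \<epsilon> lam) J N i)) - W i\<bar>
                    \<le> C * max (\<eta>1 * ln lam) \<eta>2)"
proof -
  note bpos = assms(5) and cpos = assms(6) and beta = assms(4) and Cp = assms(11) and apos = assms(10)
  obtain D where D: "D 0 = b" "\<forall>j<4. \<forall>y\<in>{0..1}. (D j has_real_derivative D (Suc j) y) (at y within {0..1})"
    using assms(1) unfolding Ck_on_def by blast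
  have "continuous_on {0..1} b"
    using D by (intro DERIV_continuous_on[of "{0..1}" b "D 1"]) auto
  then obtain y0 where y0: "y0 \<in> {0..1::real}" "\<forall>y\<in>{0..1}. b y \<le> b y0"
    using continuous_attains_sup[of "{0..1::real}" b] by auto
  define Bb where "Bb = b y0"
  have bb: "\<forall>y\<in>{0..1}. \<beta> < b y \<and> b y \<le> Bb" using y0 bpos unfolding Bb_def by auto
  have Bbp: "Bb > 0" using bb beta by force
  define Cg where "Cg = C1g \<beta> Bb a"
  have Cgp: "Cg > 0" unfolding Cg_def using C1g_pos beta apos Bbp by simp
  define C where "C = C' * (Cg + 1/\<beta>)"
  have Cpos: "C > 0" unfolding C_def using Cp Cgp beta by (intro mult_pos_pos add_pos_pos) auto
  have red: "twice_diff_01 u0" "\<forall>y\<in>{0<..<1}. - b y * deriv u0 y + c y * u0 y = f y" "u0 1 = 0"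
    using assms(12) unfolding reduced_solution_def by auto
  show ?thesis
  proof (intro exI[of _ C] conjI allI impI)
    show "C > 0" by (rule Cpos)
    fix \<epsilon> :: real and N J :: nat and lam :: real and u :: "real \<Rightarrow> real" and W :: "nat \<Rightarrow> real" and \<eta>1 \<eta>2 :: real
    assume H: "0 < \<epsilon> \<and> \<epsilon> < 1 \<and> N > 0 \<and> real J = Q * real N \<and>
      lam \<in> {real N, 1 / \<epsilon>} \<and> transition \<beta> a \<epsilon> lam \<le> Q \<and>
      bvp_solution \<epsilon> b c f u \<and>
      W 0 = - u0 0 \<and> W N = 0 \<and>
      (\<forall>i. 1 \<le> i \<and> i \<le> N - 1 \<longrightarrow>
         LN \<epsilon> b c (mesh_pt (transition \<beta> a \<epsilon> lam) J N) W i
           = \<epsilon> * deriv (deriv u0) (mesh_pt (transition \<beta> a \<epsilon> lam) J N i)) \<and>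
      \<eta>1 \<ge> 0 \<and> \<eta>2 \<ge> 0 \<and>
      (\<forall>i. 1 \<le> i \<and> i \<le> J - 1 \<longrightarrow>
         \<bar>tau \<epsilon> b (mesh_pt (transition \<beta> a \<epsilon> lam) J N) (\<lambda>x. u x - u0 x) i\<bar> \<le> C' * \<eta>1 / \<epsilon>) \<and>
      (\<forall>i. J \<le> i \<and> i \<le> N - 1 \<longrightarrow>
         \<bar>tau \<epsilon> b (mesh_pt (transition \<beta> a \<epsilon> lam) J N) (\<lambda>x. u x - u0 x) i\<bar> \<le> C' * \<eta>2)"
    define \<xi> where "\<xi> = transition \<beta> a \<epsilon> lam"
    have eps: "0 < \<epsilon>" "\<epsilon> < 1" and N0: "N > 0" and JQ: "real J = Q * real N"
      and lam: "lam \<in> {real N, 1 / \<epsilon>}" and xiQ: "\<xi> \<le> Q" and bvp: "bvp_solution \<epsilon> b c f u"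
      and W0: "W 0 = - u0 0" and WN: "W N = 0"
      and et: "\<eta>1 \<ge> 0" "\<eta>2 \<ge> 0"
      using H unfolding \<xi>_def[symmetric] by auto
    have J0: "J > 0"
    proof -
      have "Q * real N > 0" using assms(8) N0 by simp
      thus ?thesis using JQ by simp
    qed
    have JN: "J < N"
    proof -
      have "Q * real N < 1 * real N" using assms(9) N0 by (intro mult_strict_right_mono) auto
      thus ?thesis using JQ by simp
    qed
    have lnp: "ln lam > 0"
    proof -
      have "lam > 1"
      proof (cases "lam = real N")
        case True thus ?thesis using J0 JN by simp
      next
        case False
        hence "lam = 1/\<epsilon>" using lam by simp
        thus ?thesis using eps by simp
      qed
      thus ?thesis by simp
    qed
    have xi: "\<xi> = (a*\<epsilon>/\<beta>) * ln lam" unfolding \<xi>_def transition_def ..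
    have xi0: "\<xi> > 0" unfolding xi using apos eps beta lnp by simp
    interpret bar \<xi> J N \<epsilon> \<beta> Bb b c
      by unfold_locales (use xi0 xiQ assms(9) J0 JN eps beta bb cpos in auto)
    have LW: "\<forall>i. 1 \<le> i \<and> i \<le> N - 1 \<longrightarrow> LN \<epsilon> b c x W i = \<epsilon> * deriv (deriv u0) (x i)"
      and t1: "\<forall>i. 1 \<le> i \<and> i \<le> J - 1 \<longrightarrow> \<bar>tau \<epsilon> b x (\<lambda>x. u x - u0 x) i\<bar> \<le> C' * \<eta>1 / \<epsilon>"
      and t2: "\<forall>i. J \<le> i \<and> i \<le> N - 1 \<longrightarrow> \<bar>tau \<epsilon> b x (\<lambda>x. u x - u0 x) i\<bar> \<le> C' * \<eta>2"
      using H unfolding \<xi>_def[symmetric] by auto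
    have bv: "twice_diff_01 u" "\<forall>y\<in>{0<..<1}. - \<epsilon> * deriv (deriv u) y - b y * deriv u y + c y * u y = f y"
      "u 0 = 0" "u 1 = 0" using bvp unfolding bvp_solution_def by auto
    define e where "e = (\<lambda>j. (u (x j) - u0 (x j)) - W j)"
    have e0: "e 0 = 0" unfolding e_def using x_0 W0 bv by simp
    have eN: "e N = 0" unfolding e_def using x_N WN bv red by simp
    have Le: "LN \<epsilon> b c x e i = tau \<epsilon> b x (\<lambda>x. u x - u0 x) i" if i: "1 \<le> i" "i < N" for i
    proof -
      define y where "y = x i"
      have y: "y \<in> {0<..<1}" using x_in[OF i] unfolding y_def by simp
      have du: "\<And>z. z \<in> {0<..<1} \<Longrightarrow> (u has_real_derivative deriv u z) (at z) \<and> (deriv u has_real_derivative deriv (deriv u) z) (at z)"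
        using bv(1) unfolding twice_diff_01_def by blast
      have du0: "\<And>z. z \<in> {0<..<1} \<Longrightarrow> (u0 has_real_derivative deriv u0 z) (at z) \<and> (deriv u0 has_real_derivative deriv (deriv u0) z) (at z)"
        using red(1) unfolding twice_diff_01_def by blast
      have dw: "deriv (\<lambda>x. u x - u0 x) z = deriv u z - deriv u0 z" if z: "z \<in> {0<..<1}" for z
        using du[OF z] du0[OF z] by (intro DERIV_imp_deriv DERIV_diff) auto
      have ev: "eventually (\<lambda>z. deriv (\<lambda>x. u x - u0 x) z = deriv u z - deriv u0 z) (nhds y)"
      proof -
        have "eventually (\<lambda>z. z \<in> {0<..<1::real}) (nhds y)"
          using y by (intro eventually_nhds_in_open) auto
        thus ?thesis by (rule eventually_mono) (use dw in auto)
      qed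
      have d2w: "deriv (deriv (\<lambda>x. u x - u0 x)) y = deriv (deriv u) y - deriv (deriv u0) y"
      proof -
        have "deriv (deriv (\<lambda>x. u x - u0 x)) y = deriv (\<lambda>z. deriv u z - deriv u0 z) y"
          by (rule deriv_cong_ev[OF ev refl])
        also have "\<dots> = deriv (deriv u) y - deriv (deriv u0) y"
          using du[OF y] du0[OF y] by (intro DERIV_imp_deriv DERIV_diff) auto
        finally show ?thesis .
      qed
      have ode1: "- \<epsilon> * deriv (deriv u) y - b y * deriv u y + c y * u y = f y" using bv(2) y by auto
      have ode2: "- b y * deriv u0 y + c y * u0 y = f y" using red(2) y by auto
      have LWi: "LN \<epsilon> b c x W i = \<epsilon> * deriv (deriv u0) y" using LW i unfolding y_def by auto
      have "LN \<epsilon> b c x e i = LN \<epsilon> b c x (\<lambda>j. u (x j) - u0 (x j)) i - LN \<epsilon> b c x W i"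
        unfolding e_def by (rule LN_diff)
      also have "LN \<epsilon> b c x (\<lambda>j. u (x j) - u0 (x j)) i = tau \<epsilon> b x (\<lambda>x. u x - u0 x) i
          - \<epsilon> * deriv (deriv (\<lambda>x. u x - u0 x)) y - b y * deriv (\<lambda>x. u x - u0 x) y + c y * (u y - u0 y)"
        unfolding LN_def tau_def y_def by simp
      finally show ?thesis unfolding d2w dw[OF y] LWi using ode1 ode2 by (simp add: algebra_simps)
    qed
    have K: "C' * \<eta>1 \<ge> 0" "C' * \<eta>2 \<ge> 0" using Cp et by auto
    have tau: "\<forall>i. 1 \<le> i \<and> i < N \<longrightarrow> \<bar>LN \<epsilon> b c x e i\<bar> \<le> (if i < J then C' * \<eta>1/\<epsilon> else C' * \<eta>2)"
    proof (intro allI impI)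
      fix i assume i: "1 \<le> i \<and> i < N"
      show "\<bar>LN \<epsilon> b c x e i\<bar> \<le> (if i < J then C' * \<eta>1/\<epsilon> else C' * \<eta>2)"
        using Le[of i] i t1[rule_format, of i] t2[rule_format, of i] by (cases "i < J") auto
    qed
    have main: "\<forall>i\<le>N. \<bar>e i\<bar> \<le> C' * \<eta>1 * (C1g \<beta> Bb a * ln lam) + C' * \<eta>2 / \<beta>"
      by (rule core'[OF apos lnp xi e0 eN K tau])
    define M where "M = max (\<eta>1 * ln lam) \<eta>2"
    have M: "\<eta>1 * ln lam \<le> M" "\<eta>2 \<le> M" "0 \<le> M" unfolding M_def using et by auto
    have fin: "C' * \<eta>1 * (C1g \<beta> Bb a * ln lam) + C' * \<eta>2 / \<beta> \<le> C * M"
    proof -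
      have "C' * \<eta>1 * (C1g \<beta> Bb a * ln lam) = (C' * Cg) * (\<eta>1 * ln lam)" unfolding Cg_def by simp
      also have "\<dots> \<le> (C' * Cg) * M" using M Cp Cgp by (intro mult_left_mono) auto
      finally have a1: "C' * \<eta>1 * (C1g \<beta> Bb a * ln lam) \<le> (C' * Cg) * M" .
      have "C' * \<eta>2 / \<beta> = (C' / \<beta>) * \<eta>2" by simp
      also have "\<dots> \<le> (C' / \<beta>) * M" using M Cp beta by (intro mult_left_mono) auto
      finally have a2: "C' * \<eta>2 / \<beta> \<le> (C' / \<beta>) * M" .
      have "C * M = (C' * Cg) * M + (C' / \<beta>) * M" unfolding C_def by (simp add: algebra_simps)
      thus ?thesis using a1 a2 by linarith
    qed
    fix i assume iN: "i \<le> N"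
    show "\<bar>(u (mesh_pt (transition \<beta> a \<epsilon> lam) J N i)
                        - u0 (mesh_pt (transition \<beta> a \<epsilon> lam) J N i)) - W i\<bar>
                    \<le> C * max (\<eta>1 * ln lam) \<eta>2"
      using main iN fin unfolding e_def \<xi>_def[symmetric] M_def[symmetric] by force
  qed
qed

end
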